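(* Let $m \geq 1$ and let $P_m$ be the regular polygon with $2^{m+1}$ edges, centered at the origin, inscribed in the unit circle, with a vertex at $(0,1)$. Let $f_m:\mathbb{R}^2 \to \{-1,1\}$ be $f_m(x) = 1$ if $x$ is inside $P_m$ and $f_m(x) = -1$ otherwise. Suppose $g:\mathbb{R}^2 \to \mathbb{R}$ is a piecewise linear function whose domain is partitioned into convex regions (response regions) on each of which $g$ is affine, and such that the classifier $x \mapsto 1$ if $g(x) > 0$, $x \mapsto -1$ otherwise, equals $f_m$. Then the partition has at least $2^m$ response regions.
   Context: A response region of a piecewise linear function $g:\mathbb{R}^2\to\mathbb{R}$ is one of the convex regions (convex polygons) of a partition of the plane such that $g$ restricted to each region is an affine function. *)

theory Defs
  imports "HOL-Analysis.Analysis"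
begin

definition polygon_vertex :: "nat \<Rightarrow> nat \<Rightarrow> real \<times> real" where
  "polygon_vertex m k =
     (cos (pi / 2 + 2 * pi * real k / 2 ^ (m + 1)),
      sin (pi / 2 + 2 * pi * real k / 2 ^ (m + 1)))"

definition polygon :: "nat \<Rightarrow> (real \<times> real) set" where
  "polygon m = convex hull {polygon_vertex m k | k. k < 2 ^ (m + 1)}"

definition f_target :: "nat \<Rightarrow> real \<times> real \<Rightarrow> int" where
  "f_target m x = (if x \<in> polygon m then 1 else -1)"

definition classifier :: "(real \<times> real \<Rightarrow> real) \<Rightarrow> real \<times> real \<Rightarrow> int" where
  "classifier g x = (if g x > 0 then 1 else -1)"

definition affine_on :: "(real \<times> real \<Rightarrow> real) \<Rightarrow> (real \<times> real) set \<Rightarrow> bool" where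
  "affine_on g C \<longleftrightarrow> (\<exists>a b c. \<forall>x\<in>C. g x = a * fst x + b * snd x + c)"

definition response_partition :: "(real \<times> real \<Rightarrow> real) \<Rightarrow> (real \<times> real) set set \<Rightarrow> bool" where
  "response_partition g R \<longleftrightarrow>
     finite R \<and> \<Union>R = UNIV \<and> (\<forall>C\<in>R. C \<noteq> {} \<and> convex C \<and> affine_on g C) \<and>
     (\<forall>C\<in>R. \<forall>D\<in>R. C \<noteq> D \<longrightarrow> interior C \<inter> interior D = {})"

end

theory Submission
  imports Defs
begin

lemma pv_alt: "polygon_vertex m k = (cos (pi/2 + pi * real k / 2^m), sin (pi/2 + pi * real k / 2^m))"
proof -
  have "2 * pi * real k / 2 ^ (m + 1) = pi * real k / 2^m" by (simp add: field_simps)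
  then show ?thesis unfolding polygon_vertex_def by simp
qed

lemma pv_in: "k < 2^(m+1) \<Longrightarrow> polygon_vertex m k \<in> polygon m"
  unfolding polygon_def by (rule hull_inc) blast

lemma pv_neg_in:
  assumes "l < 2^(m+1)"
  shows "- polygon_vertex m l \<in> polygon m"
proof (cases "l < 2^m")
  case True
  have "polygon_vertex m (l + 2^m) = - polygon_vertex m l"
  proof -
    define y where "y = pi/2 + pi * real l / 2^m"
    have e: "pi/2 + pi * real (l + 2^m) / 2^m = y + pi"
      unfolding y_def by (simp add: field_simps)
    show ?thesis unfolding pv_alt e y_def[symmetric] by simp
  qed
  moreover have "l + 2^m < 2^(m+1)" using True by simp
  ultimately show ?thesis using pv_in by metis
next
  case False
  have "polygon_vertex m (l - 2^m) = - polygon_vertex m l"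
  proof -
    have h: "real (l - 2^m) = real l - 2^m" using False by (simp add: of_nat_diff)
    define y where "y = pi/2 + pi * real l / 2^m"
    have e: "pi/2 + pi * real (l - 2^m) / 2^m = y - pi"
      unfolding y_def h by (simp add: field_simps)
    show ?thesis unfolding pv_alt e y_def[symmetric] by (simp add: cos_diff sin_diff)
  qed
  moreover have "l - 2^m < 2^(m+1)" using assms by simp
  ultimately show ?thesis using pv_in by metis
qed

lemma scaled_in:
  assumes "l < 2^(m+1)" "\<bar>s\<bar> \<le> 1"
  shows "s *\<^sub>R polygon_vertex m l \<in> polygon m"
proof -
  have cv: "convex (polygon m)" unfolding polygon_def by (rule convex_convex_hull)
  have "((1+s)/2) *\<^sub>R polygon_vertex m l + ((1-s)/2) *\<^sub>R (- polygon_vertex m l) \<in> polygon m"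
    apply (rule convexD[OF cv pv_in[OF assms(1)] pv_neg_in[OF assms(1)]])
    using assms(2) by (auto simp: field_simps)
  moreover have "((1+s)/2) *\<^sub>R polygon_vertex m l + ((1-s)/2) *\<^sub>R (- polygon_vertex m l)
     = s *\<^sub>R polygon_vertex m l"
  proof -
    have "((1+s)/2) *\<^sub>R polygon_vertex m l + ((1-s)/2) *\<^sub>R (- polygon_vertex m l)
      = ((1+s)/2 - (1-s)/2) *\<^sub>R polygon_vertex m l" by (simp add: scaleR_diff_left)
    also have "(1+s)/2 - (1-s)/2 = s" by (simp add: field_simps)
    finally show ?thesis .
  qed
  ultimately show ?thesis by simp
qed

lemma norm_cs: "norm (cos a, sin (a::real)) = 1"
  unfolding norm_Pair real_norm_def power2_abs by simp

lemma polygon_norm: "x \<in> polygon m \<Longrightarrow> norm x \<le> 1"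
proof -
  assume x: "x \<in> polygon m"
  have "polygon m \<subseteq> cball 0 1"
    unfolding polygon_def
    by (rule hull_minimal) (auto simp: polygon_vertex_def norm_cs)
  with x show ?thesis by auto
qed

lemma sum_prod:
  "polygon_vertex m (2*i) + polygon_vertex m (2*j)
   = (2 * cos (pi * (real i - real j) / 2^m)) *\<^sub>R polygon_vertex m (i+j)"
proof -
  define a where "a = pi/2 + pi * real (i+j) / 2^m"
  define d where "d = pi * (real i - real j) / 2^m"
  have h1: "pi/2 + pi * real (2*i) / 2^m = a + d" unfolding a_def d_def by (simp add: field_simps)
  have h2: "pi/2 + pi * real (2*j) / 2^m = a - d" unfolding a_def d_def by (simp add: field_simps)
  show ?thesis unfolding pv_alt h1 h2 a_def[symmetric] d_def[symmetric]
    by (simp add: cos_add cos_diff sin_add sin_diff algebra_simps)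
qed

lemma cos_bound:
  assumes "i < 2^m" "j < 2^m" "i \<noteq> j"
  shows "\<bar>cos (pi * (real i - real j) / 2^m)\<bar> \<le> cos (pi / 2^m)"
proof -
  define x where "x = \<bar>pi * (real i - real j) / 2^m\<bar>"
  have cx: "cos (pi * (real i - real j) / 2^m) = cos x" unfolding x_def by (simp only: cos_abs_real)
  have d: "x = pi * \<bar>real i - real j\<bar> / 2^m" unfolding x_def by (simp add: abs_mult)
  have d1: "1 \<le> \<bar>real i - real j\<bar>" using assms(3) by linarith
  have d2: "\<bar>real i - real j\<bar> \<le> 2^m - 1"
  proof -
    have "real i \<le> 2^m - 1" "real j \<le> 2^m - 1"
    proof -
      have "real (i+1) \<le> real ((2::nat)^m)" "real (j+1) \<le> real ((2::nat)^m)"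
        using assms(1,2) by (intro of_nat_mono; simp)+
      then show "real i \<le> 2^m - 1" "real j \<le> 2^m - 1" by simp_all
    qed
    then show ?thesis by linarith
  qed
  have p: "(0::real) < 2^m" by simp
  have lo: "pi / 2^m \<le> x" unfolding d using d1 p
    by (simp add: divide_right_mono mult_left_mono)
  have hi: "x \<le> pi - pi / 2^m"
  proof -
    have "x \<le> pi * (2^m - 1) / 2^m" unfolding d using d2 p
      by (simp add: divide_right_mono mult_left_mono)
    also have "\<dots> = pi - pi / 2^m" using p by (simp add: field_simps)
    finally show ?thesis .
  qed
  have pp: "0 \<le> pi / 2^m" by simp
  have pq: "pi / 2^m \<le> pi" using p by (simp add: divide_le_eq)
  have "cos x \<le> cos (pi / 2^m)"
    by (rule cos_monotone_0_pi_le) (use lo hi pp in linarith)+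
  moreover have "- cos x \<le> cos (pi / 2^m)"
  proof -
    have "- cos x = cos (pi - x)" by simp
    also have "\<dots> \<le> cos (pi / 2^m)"
      by (rule cos_monotone_0_pi_le) (use lo hi pp in linarith)+
    finally show ?thesis .
  qed
  ultimately show ?thesis unfolding cx by linarith
qed

theorem lemma2:
  fixes m :: nat and g :: "real \<times> real \<Rightarrow> real" and R :: "(real \<times> real) set set"
  assumes "m \<ge> 1"
    and "response_partition g R"
    and "classifier g = f_target m"
  shows "card R \<ge> 2 ^ m"
proof -
  define c0 where "c0 = cos (pi / 2^m)"
  define t where "t = 2 / (1 + c0)"
  have p: "(0::real) < 2^m" by simp
  have c0ge: "0 \<le> c0" unfolding c0_def
  proof (rule cos_ge_zero)
    have "(2::real) \<le> 2^m" using assms(1)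
      by (metis one_le_numeral power_increasing power_one_right)
    then have "pi / 2^m \<le> pi / 2" by (intro divide_left_mono) (auto simp: pi_ge_zero)
    then show "pi / 2^m \<le> pi / 2" .
    show "- (pi / 2) \<le> pi / 2^m" using pi_ge_zero by (smt (verit) divide_nonneg_pos p)
  qed
  have c0lt: "c0 < 1" unfolding c0_def
  proof -
    have "cos (pi / 2^m) < cos 0"
      by (rule cos_monotone_0_pi) (auto simp: divide_le_eq)
    then show "cos (pi / 2^m) < 1" by simp
  qed
  have t1: "t > 1" unfolding t_def using c0ge c0lt by (simp add: field_simps)
  have tc: "t * c0 \<le> 1" unfolding t_def using c0ge c0lt by (simp add: field_simps)
  define w where "w k = t *\<^sub>R polygon_vertex m (2*k)" for k
  have wout: "w k \<notin> polygon m" for k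
  proof
    assume "w k \<in> polygon m"
    then have "norm (w k) \<le> 1" by (rule polygon_norm)
    moreover have "norm (w k) = t" unfolding w_def norm_scaleR pv_alt norm_cs using t1 by simp
    ultimately show False using t1 by simp
  qed
  have gw: "g (w k) \<le> 0" for k
  proof -
    have "classifier g (w k) = -1" using assms(3) wout[of k] by (simp add: f_target_def)
    then show ?thesis unfolding classifier_def by (auto split: if_splits)
  qed
  have mid: "(1/2) *\<^sub>R w i + (1/2) *\<^sub>R w j \<in> polygon m"
    if "i < 2^m" "j < 2^m" "i \<noteq> j" for i j
  proof -
    have "(1/2) *\<^sub>R w i + (1/2) *\<^sub>R w j = (t/2) *\<^sub>R (polygon_vertex m (2*i) + polygon_vertex m (2*j))"
      unfolding w_def by (simp add: scaleR_add_right)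
    also have "\<dots> = (t * cos (pi * (real i - real j) / 2^m)) *\<^sub>R polygon_vertex m (i+j)"
      unfolding sum_prod by simp
    also have "\<dots> \<in> polygon m"
    proof (rule scaled_in)
      show "i + j < 2^(m+1)" using that by simp
      have "\<bar>t * cos (pi * (real i - real j) / 2^m)\<bar> = t * \<bar>cos (pi * (real i - real j) / 2^m)\<bar>"
        using t1 by (simp add: abs_mult)
      also have "\<dots> \<le> t * c0" unfolding c0_def
        using cos_bound[OF that] t1 by (intro mult_left_mono) auto
      finally show "\<bar>t * cos (pi * (real i - real j) / 2^m)\<bar> \<le> 1" using tc by linarith
    qed
    finally show ?thesis .
  qed
  have gpos: "x \<in> polygon m \<Longrightarrow> g x > 0" for x
  proof -
    assume "x \<in> polygon m"
    then have "classifier g x = 1" using assms(3) by (simp add: f_target_def)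
    then show ?thesis unfolding classifier_def by (auto split: if_splits)
  qed
  have RP: "finite R" "\<Union>R = UNIV" "\<And>C. C \<in> R \<Longrightarrow> convex C \<and> affine_on g C"
    using assms(2) unfolding response_partition_def by auto
  define Cf where "Cf k = (SOME C. C \<in> R \<and> w k \<in> C)" for k
  have Cf: "Cf k \<in> R \<and> w k \<in> Cf k" for k
  proof -
    have "\<exists>C. C \<in> R \<and> w k \<in> C" using RP(2) by blast
    then show ?thesis unfolding Cf_def by (rule someI_ex)
  qed
  have inj: "inj_on Cf {..<2^m}"
  proof (rule inj_onI, rule ccontr)
    fix i j assume i: "i \<in> {..<(2::nat)^m}" and j: "j \<in> {..<(2::nat)^m}"
      and eq: "Cf i = Cf j" and ne: "i \<noteq> j"
    define C where "C = Cf i"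
    have CR: "C \<in> R" and wi: "w i \<in> C" and wj: "w j \<in> C"
      using Cf[of i] Cf[of j] eq unfolding C_def by auto
    obtain a b c where abc: "\<forall>x\<in>C. g x = a * fst x + b * snd x + c"
      using RP(3)[OF CR] unfolding affine_on_def by blast
    define M where "M = (1/2) *\<^sub>R w i + (1/2) *\<^sub>R w j"
    have MC: "M \<in> C" unfolding M_def
      using RP(3)[OF CR] wi wj by (intro convexD) auto
    have "g M = (g (w i) + g (w j)) / 2"
      using abc MC wi wj unfolding M_def by (simp add: algebra_simps)
    then have "g M \<le> 0" using gw[of i] gw[of j] by simp
    moreover have "g M > 0" using gpos mid[of i j] i j ne unfolding M_def by simp
    ultimately show False by simp
  qed
  have "card {..<(2::nat)^m} \<le> card R"
    by (rule card_inj_on_le[OF inj]) (use Cf RP(1) in auto)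
  then show ?thesis by simp
qed

end
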